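(* Let $k_1,k_2$ be integers with $k_2\ge k_1\ge 1$. Then the submodule $\mathcal{J}^{12}$ of $\mathcal{F}$ generated by $\{R_{12}^{n_1,n_2,n_3}: n_1,n_2,n_3\in\mathbb{Z}\}$ is generated by $$J^{12}_{\min}=J^{12}_{(k_1,\infty),[0,\infty)}\cup J^{12}_{(\frac{k_1}{2},k_1],(\frac{k_2}{2},\infty)}\cup J^{12}_{[0,\frac{k_1}{2}],[\frac{k_2}{2},\infty)}.$$
   Context: $\mathcal{F}$ is the free $\mathbb{Z}[A^{\pm1}]$-module with basis the symbols $s_1^{l_1}s_2^{l_2}s_3^{l_3}$, $l_i\ge 0$, extended multilinearly to integer exponents by $s_i^{-1}=0$ and $s_i^{n}=-s_i^{-n-2}$ for $n\le -2$. For $n_i\in\mathbb{Z}$, $R_{12}(n_1,n_2,n_3)=-A^{-n_1-n_2-2}s_1^{n_1}s_2^{n_2}s_3^{n_3}-A^{-n_1-n_2+2}s_1^{n_1-2}s_2^{n_2-2}s_3^{n_3}-A^{-n_1-n_2}s_1^{n_1-1}s_2^{n_2-1}s_3^{n_3+1}-A^{-n_1-n_2}s_1^{n_1-1}s_2^{n_2-1}s_3^{n_3-1}$ and $R_{12}^{n_1,n_2,n_3}=R_{12}(n_1,n_2,n_3)-R_{12}(-n_1+k_1,-n_2+k_2,n_3)$. For subsets $I_1,I_2\subseteq\mathbb{R}$, $J^{12}_{I_1,I_2}=\{R^{n_1,n_2,n_3}_{12}: n_1\in I_1\cap\mathbb{Z},\ n_2\in I_2\cap\mathbb{Z},\ n_3\in\mathbb{Z}_{\ge0}\}$.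 *)

theory Defs
  imports Complex_Main "HOL-Library.Poly_Mapping"
begin

text \<open>The coefficient ring Z[A^{+-1}] is modelled as the group ring of (int,+) over int:
  a Laurent polynomial is a finitely supported map from exponents to integer coefficients.\<close>
type_synonym laurent = "int \<Rightarrow>\<^sub>0 int"

definition Apow :: "int \<Rightarrow> laurent" where
  "Apow k = Poly_Mapping.single k 1"

text \<open>The free Z[A^{+-1}]-module F with basis the monomials s1^l1 s2^l2 s3^l3, l_i >= 0.\<close>
type_synonym fmod = "(nat \<times> nat \<times> nat) \<Rightarrow>\<^sub>0 laurent"

definition smul :: "laurent \<Rightarrow> fmod \<Rightarrow> fmod" where
  "smul c x = Poly_Mapping.map (\<lambda>a. c * a) x"

inductive_set submod_gen :: "fmod set \<Rightarrow> fmod set" for S :: "fmod set" where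
  gen_zero: "0 \<in> submod_gen S"
| gen_base: "x \<in> S \<Longrightarrow> x \<in> submod_gen S"
| gen_add: "x \<in> submod_gen S \<Longrightarrow> y \<in> submod_gen S \<Longrightarrow> x + y \<in> submod_gen S"
| gen_smul: "x \<in> submod_gen S \<Longrightarrow> smul c x \<in> submod_gen S"

text \<open>Single-variable convention for integer exponents: s^n for n >= 0 is the basis power,
  s^(-1) = 0, s^n = - s^(-n-2) for n <= -2.  sexp n = (sign, nonnegative exponent).\<close>
definition sexp :: "int \<Rightarrow> int \<times> nat" where
  "sexp n = (if n \<ge> 0 then (1, nat n) else if n = -1 then (0, 0) else (-1, nat (-n-2)))"

definition mono :: "int \<Rightarrow> int \<Rightarrow> int \<Rightarrow> fmod" where
  "mono n1 n2 n3 =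
     Poly_Mapping.single (snd (sexp n1), snd (sexp n2), snd (sexp n3))
       (of_int (fst (sexp n1) * fst (sexp n2) * fst (sexp n3)))"

definition R12 :: "int \<Rightarrow> int \<Rightarrow> int \<Rightarrow> fmod" where
  "R12 n1 n2 n3 =
     - smul (Apow (-n1-n2-2)) (mono n1 n2 n3)
     - smul (Apow (-n1-n2+2)) (mono (n1-2) (n2-2) n3)
     - smul (Apow (-n1-n2)) (mono (n1-1) (n2-1) (n3+1))
     - smul (Apow (-n1-n2)) (mono (n1-1) (n2-1) (n3-1))"

definition R12sup :: "int \<Rightarrow> int \<Rightarrow> int \<Rightarrow> int \<Rightarrow> int \<Rightarrow> fmod" where
  "R12sup k1 k2 n1 n2 n3 = R12 n1 n2 n3 - R12 (-n1+k1) (-n2+k2) n3"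

definition J12 :: "int \<Rightarrow> int \<Rightarrow> real set \<Rightarrow> real set \<Rightarrow> fmod set" where
  "J12 k1 k2 I1 I2 = {R12sup k1 k2 n1 n2 n3 | n1 n2 n3.
      real_of_int n1 \<in> I1 \<and> real_of_int n2 \<in> I2 \<and> n3 \<ge> 0}"

end

theory Submission
  imports Defs
begin

lemma lookup_smul: "Poly_Mapping.lookup (smul c x) k = c * Poly_Mapping.lookup x k"
  unfolding smul_def by transfer (simp add: when_def)

lemma smul_add: "smul c (x + y) = smul c x + smul c y"
  by (rule poly_mapping_eqI) (simp add: lookup_smul lookup_add distrib_left)

lemma smul_minus: "smul c (- x) = - smul c x"
  by (rule poly_mapping_eqI) (simp add: lookup_smul)

lemma smul_diff: "smul c (x - y) = smul c x - smul c y"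
  by (rule poly_mapping_eqI) (simp add: lookup_smul lookup_minus right_diff_distrib)

lemma smul_smul: "smul c (smul d x) = smul (c * d) x"
  by (rule poly_mapping_eqI) (simp add: lookup_smul mult.assoc)

lemma smul_one: "smul 1 x = x"
  by (rule poly_mapping_eqI) (simp add: lookup_smul)

lemma smul_zero: "smul c 0 = 0"
  by (rule poly_mapping_eqI) (simp add: lookup_smul)

lemma smul_neg1: "smul (-1) x = - x"
  by (rule poly_mapping_eqI) (simp add: lookup_smul)

lemma Apow_mult: "Apow i * Apow j = Apow (i + j)"
  unfolding Apow_def by (simp add: mult_single)

lemma Apow_0: "Apow 0 = 1"
  unfolding Apow_def by simp

lemma smul_AA: "smul (Apow i) (smul (Apow j) x) = smul (Apow (i + j)) x"
  by (simp add: smul_smul Apow_mult)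

lemma smul_A0: "smul (Apow 0) x = x"
  by (simp add: Apow_0 smul_one)

lemma torsion_free: "(x::fmod) + x = 0 \<Longrightarrow> x = 0"
proof (rule poly_mapping_eqI)
  fix k assume h: "x + x = 0"
  have h2: "Poly_Mapping.lookup x k + Poly_Mapping.lookup x k = 0" using h by (metis lookup_add lookup_zero)
  have "Poly_Mapping.lookup (Poly_Mapping.lookup x k) j = 0" for j
  proof -
    have e: "Poly_Mapping.lookup (Poly_Mapping.lookup x k + Poly_Mapping.lookup x k) j = 0" by (simp only: h2 lookup_zero)
    have "Poly_Mapping.lookup (Poly_Mapping.lookup x k + Poly_Mapping.lookup x k) j = Poly_Mapping.lookup (Poly_Mapping.lookup x k) j + Poly_Mapping.lookup (Poly_Mapping.lookup x k) j" by (rule lookup_add)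
    with e show ?thesis by simp
  qed
  then show "Poly_Mapping.lookup x k = Poly_Mapping.lookup 0 k" by (simp add: poly_mapping_eqI)
qed

lemma sexp_refl: "sexp (-n-2) = (- fst (sexp n), snd (sexp n))"
  unfolding sexp_def by auto

lemma mono_r1: "a' + a = -2 \<Longrightarrow> mono a' b c = - mono a b c"
proof -
  assume "a' + a = -2" then have "a' = -a-2" by simp
  then show ?thesis unfolding mono_def by (simp add: sexp_refl single_uminus)
qed

lemma mono_r2: "b' + b = -2 \<Longrightarrow> mono a b' c = - mono a b c"
proof -
  assume "b' + b = -2" then have "b' = -b-2" by simp
  then show ?thesis unfolding mono_def by (simp add: sexp_refl single_uminus)
qed

lemma mono_r3: "c' + c = -2 \<Longrightarrow> mono a b c' = - mono a b c"
proof -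
  assume "c' + c = -2" then have "c' = -c-2" by simp
  then show ?thesis unfolding mono_def by (simp add: sexp_refl single_uminus)
qed


definition NR :: "int \<Rightarrow> int \<Rightarrow> int \<Rightarrow> fmod" where
  "NR a b c = smul (Apow (-2)) (mono a b c) + smul (Apow 2) (mono (a-2) (b-2) c)
      + mono (a-1) (b-1) (c+1) + mono (a-1) (b-1) (c-1)"
definition NRa :: "int \<Rightarrow> int \<Rightarrow> int \<Rightarrow> fmod" where
  "NRa a b c = smul (Apow (-2)) (mono a b c) + smul (Apow 2) (mono (a-2) (b+2) c)
      + mono (a-1) (b+1) (c+1) + mono (a-1) (b+1) (c-1)"
definition NRb :: "int \<Rightarrow> int \<Rightarrow> int \<Rightarrow> fmod" where
  "NRb a b c = smul (Apow (-2)) (mono a b c) + smul (Apow 2) (mono (a+2) (b-2) c)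
      + mono (a+1) (b-1) (c+1) + mono (a+1) (b-1) (c-1)"
definition V :: "int \<Rightarrow> int \<Rightarrow> int \<Rightarrow> fmod" where
  "V a b c = NR a b c + smul (Apow 2) (NR (a-1) (b+1) (c+1) + NR (a-1) (b+1) (c-1))
      + smul (Apow 4) (NR (a-2) (b+2) c)"
definition V' :: "int \<Rightarrow> int \<Rightarrow> int \<Rightarrow> fmod" where
  "V' a b c = NR a b c + smul (Apow 2) (NR (a+1) (b-1) (c+1) + NR (a+1) (b-1) (c-1))
      + smul (Apow 4) (NR (a+2) (b-2) c)"

lemma NR_r2: assumes "b' + b = -2" shows "NR a b' c = - NRa a b c"
proof -
  have 1: "mono a b' c = - mono a b c" by (rule mono_r2) (use assms in simp)
  have 2: "mono (a-2) (b'-2) c = - mono (a-2) (b+2) c" by (rule mono_r2) (use assms in simp)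
  have 3: "mono (a-1) (b'-1) c' = - mono (a-1) (b+1) c'" for c' by (rule mono_r2) (use assms in simp)
  show ?thesis unfolding NR_def NRa_def 1 2 3 by (simp add: smul_minus)
qed

lemma NR_r1: assumes "a' + a = -2" shows "NR a' b c = - NRb a b c"
proof -
  have 1: "mono a' b c = - mono a b c" by (rule mono_r1) (use assms in simp)
  have 2: "mono (a'-2) (b-2) c = - mono (a+2) (b-2) c" by (rule mono_r1) (use assms in simp)
  have 3: "mono (a'-1) (b-1) c' = - mono (a+1) (b-1) c'" for c' by (rule mono_r1) (use assms in simp)
  show ?thesis unfolding NR_def NRb_def 1 2 3 by (simp add: smul_minus)
qed

lemma KEY1: "V a b c = NRa a b c + smul (Apow 2) (NRa (a-1) (b-1) (c+1) + NRa (a-1) (b-1) (c-1))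
      + smul (Apow 4) (NRa (a-2) (b-2) c)"
  unfolding V_def NR_def NRa_def
  by (simp add: smul_add smul_AA smul_A0 algebra_simps)

lemma KEY2: "V' a b c = NRb a b c + smul (Apow 2) (NRb (a-1) (b-1) (c+1) + NRb (a-1) (b-1) (c-1))
      + smul (Apow 4) (NRb (a-2) (b-2) c)"
  unfolding V'_def NR_def NRb_def
  by (simp add: smul_add smul_AA smul_A0 algebra_simps)

lemma L1: assumes "b' + b = -2" shows "V a b c + V a b' c = 0"
proof -
  have "V a b' c = - (NRa a b c + smul (Apow 2) (NRa (a-1) (b-1) (c+1) + NRa (a-1) (b-1) (c-1))
      + smul (Apow 4) (NRa (a-2) (b-2) c))"
  proof -
    have 1: "NR a b' c = - NRa a b c" by (rule NR_r2) (use assms in simp)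
    have 2: "NR (a-1) (b'+1) c' = - NRa (a-1) (b-1) c'" for c' by (rule NR_r2) (use assms in simp)
    have 3: "NR (a-2) (b'+2) c = - NRa (a-2) (b-2) c" by (rule NR_r2) (use assms in simp)
    show ?thesis unfolding V_def 1 2 3 by (simp add: smul_minus smul_add smul_diff)
  qed
  then show ?thesis by (simp add: KEY1)
qed

lemma L2: assumes "a' + a = -2" shows "V' a b c + V' a' b c = 0"
proof -
  have "V' a' b c = - (NRb a b c + smul (Apow 2) (NRb (a-1) (b-1) (c+1) + NRb (a-1) (b-1) (c-1))
      + smul (Apow 4) (NRb (a-2) (b-2) c))"
  proof -
    have 1: "NR a' b c = - NRb a b c" by (rule NR_r1) (use assms in simp)
    have 2: "NR (a'+1) (b-1) c' = - NRb (a-1) (b-1) c'" for c' by (rule NR_r1) (use assms in simp)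
    have 3: "NR (a'+2) (b-2) c = - NRb (a-2) (b-2) c" by (rule NR_r1) (use assms in simp)
    show ?thesis unfolding V'_def 1 2 3 by (simp add: smul_minus smul_add smul_diff)
  qed
  then show ?thesis by (simp add: KEY2)
qed

lemma R12_NR: "R12 n1 n2 n3 = - smul (Apow (-n1-n2)) (NR n1 n2 n3)"
  unfolding R12_def NR_def
  by (simp add: smul_add smul_AA algebra_simps)


definition Z :: "int \<Rightarrow> int \<Rightarrow> int \<Rightarrow> int \<Rightarrow> int \<Rightarrow> fmod" where
  "Z k1 k2 a b c = smul (Apow (a+b)) (R12sup k1 k2 a b c
     + smul (Apow 2) (R12sup k1 k2 (a-1) (b+1) (c+1) + R12sup k1 k2 (a-1) (b+1) (c-1))
     + smul (Apow 4) (R12sup k1 k2 (a-2) (b+2) c))"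

lemma R12_sm: assumes "n1' = n1" "n2' = n2" "e = n1 + n2 + d"
  shows "smul (Apow e) (R12 n1' n2' n3) = - smul (Apow d) (NR n1 n2 n3)"
  using assms by (simp add: R12_NR smul_minus smul_AA)

lemma Z_eq: "Z k1 k2 a b c = - V a b c + smul (Apow (2*(a+b)-k1-k2)) (V' (k1-a) (k2-b) c)"
proof -
  let ?e = "2*(a+b)-k1-k2"
  have t1: "smul (Apow (a+b)) (R12 a b c) = - smul (Apow 0) (NR a b c)"
    by (rule R12_sm) simp_all
  have t2: "smul (Apow (a+b+2)) (R12 (a-1) (b+1) c') = - smul (Apow 2) (NR (a-1) (b+1) c')" for c'
    by (rule R12_sm) simp_all
  have t3: "smul (Apow (a+b+4)) (R12 (a-2) (b+2) c) = - smul (Apow 4) (NR (a-2) (b+2) c)"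
    by (rule R12_sm) simp_all
  have s1: "smul (Apow (a+b)) (R12 (-a+k1) (-b+k2) c) = - smul (Apow ?e) (NR (k1-a) (k2-b) c)"
    by (rule R12_sm) simp_all
  have s2: "smul (Apow (a+b+2)) (R12 (-(a-1)+k1) (-(b+1)+k2) c') = - smul (Apow (?e+2)) (NR (k1-a+1) (k2-b-1) c')" for c'
    by (rule R12_sm) simp_all
  have s3: "smul (Apow (a+b+4)) (R12 (-(a-2)+k1) (-(b+2)+k2) c) = - smul (Apow (?e+4)) (NR (k1-a+2) (k2-b-2) c)"
    by (rule R12_sm) simp_all
  have "Z k1 k2 a b c = smul (Apow (a+b)) (R12 a b c) - smul (Apow (a+b)) (R12 (-a+k1) (-b+k2) c)
     + (smul (Apow (a+b+2)) (R12 (a-1) (b+1) (c+1)) - smul (Apow (a+b+2)) (R12 (-(a-1)+k1) (-(b+1)+k2) (c+1))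
     + (smul (Apow (a+b+2)) (R12 (a-1) (b+1) (c-1)) - smul (Apow (a+b+2)) (R12 (-(a-1)+k1) (-(b+1)+k2) (c-1))))
     + (smul (Apow (a+b+4)) (R12 (a-2) (b+2) c) - smul (Apow (a+b+4)) (R12 (-(a-2)+k1) (-(b+2)+k2) c))"
    unfolding Z_def R12sup_def by (simp only: smul_add smul_diff smul_AA add.assoc)
  also have "\<dots> = - V a b c + smul (Apow ?e) (V' (k1-a) (k2-b) c)"
    unfolding t1 t2 t3 s1 s2 s3 V_def V'_def
    by (simp add: smul_add smul_AA smul_A0 algebra_simps)
  finally show ?thesis .
qed

lemma REL_gen:
  "Z k1 k2 a b c + Z k1 k2 a (-b-2) c
   + smul (Apow (4*(a-k1-1))) (Z k1 k2 (2*k1+2-a) b c + Z k1 k2 (2*k1+2-a) (-b-2) c) = 0"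
proof -
  let ?a = "2*k1+2-a" and ?K = "k1+k2"
  have v1: "V a b c + V a (-b-2) c = 0" by (rule L1) simp
  have v2: "V ?a b c + V ?a (-b-2) c = 0" by (rule L1) simp
  have w1: "V' (k1-a) (k2-b) c + V' (k1-?a) (k2-b) c = 0" by (rule L2) simp
  have w2: "V' (k1-a) (k2-(-b-2)) c + V' (k1-?a) (k2-(-b-2)) c = 0" by (rule L2) simp
  have e1: "4*(a-k1-1) + (2*(?a+b)-k1-k2) = 2*(a+b)-k1-k2" by simp
  have e2: "4*(a-k1-1) + (2*(?a+(-b-2))-k1-k2) = 2*(a+(-b-2))-k1-k2" by simp
  have "Z k1 k2 a b c + Z k1 k2 a (-b-2) c
   + smul (Apow (4*(a-k1-1))) (Z k1 k2 ?a b c + Z k1 k2 ?a (-b-2) c)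
   = - (V a b c + V a (-b-2) c) - smul (Apow (4*(a-k1-1))) (V ?a b c + V ?a (-b-2) c)
     + smul (Apow (2*(a+b)-k1-k2)) (V' (k1-a) (k2-b) c + V' (k1-?a) (k2-b) c)
     + smul (Apow (2*(a+(-b-2))-k1-k2)) (V' (k1-a) (k2-(-b-2)) c + V' (k1-?a) (k2-(-b-2)) c)"
    unfolding Z_eq smul_add smul_minus smul_diff smul_AA e1 e2
    by (simp add: algebra_simps)
  also have "\<dots> = 0" unfolding v1 v2 w1 w2 by (simp add: smul_zero)
  finally show ?thesis .
qed


lemma REL_a: "Z k1 k2 (k1+1) b c + Z k1 k2 (k1+1) (-b-2) c = 0"
proof -
  have h: "Z k1 k2 (k1+1) b c + Z k1 k2 (k1+1) (-b-2) c
   + smul (Apow (4*((k1+1)-k1-1))) (Z k1 k2 (2*k1+2-(k1+1)) b c + Z k1 k2 (2*k1+2-(k1+1)) (-b-2) c) = 0"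
    by (rule REL_gen)
  have e1: "2*k1+2-(k1+1) = k1+1" and e2: "4*((k1+1)-k1-1) = (0::int)" by simp_all
  from h have "(Z k1 k2 (k1+1) b c + Z k1 k2 (k1+1) (-b-2) c) + (Z k1 k2 (k1+1) b c + Z k1 k2 (k1+1) (-b-2) c) = 0"
    unfolding e1 e2 smul_A0 .
  then show ?thesis by (rule torsion_free)
qed

lemma REL_b: "Z k1 k2 a (-1) c + smul (Apow (4*(a-k1-1))) (Z k1 k2 (2*k1+2-a) (-1) c) = 0"
proof -
  have h: "Z k1 k2 a (-1) c + Z k1 k2 a (-(-1)-2) c
   + smul (Apow (4*(a-k1-1))) (Z k1 k2 (2*k1+2-a) (-1) c + Z k1 k2 (2*k1+2-a) (-(-1)-2) c) = 0"
    by (rule REL_gen)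
  have e1: "-(-1)-2 = (-1::int)" by simp
  from h have "(Z k1 k2 a (-1) c + smul (Apow (4*(a-k1-1))) (Z k1 k2 (2*k1+2-a) (-1) c))
     + (Z k1 k2 a (-1) c + smul (Apow (4*(a-k1-1))) (Z k1 k2 (2*k1+2-a) (-1) c)) = 0"
    unfolding e1 smul_add by (simp add: algebra_simps)
  then show ?thesis by (rule torsion_free)
qed

lemma REL_ab: "Z k1 k2 (k1+1) (-1) c = 0"
proof -
  have "Z k1 k2 (k1+1) (-1) c + Z k1 k2 (k1+1) (-(-1)-2) c = 0" by (rule REL_a)
  then have "Z k1 k2 (k1+1) (-1) c + Z k1 k2 (k1+1) (-1) c = 0" by simp
  then show ?thesis by (rule torsion_free)
qed

lemma G_neg: "x \<in> submod_gen S \<Longrightarrow> - x \<in> submod_gen S"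
  by (metis smul_neg1 submod_gen.gen_smul)

lemma G_diff: "x \<in> submod_gen S \<Longrightarrow> y \<in> submod_gen S \<Longrightarrow> x - y \<in> submod_gen S"
  by (metis G_neg diff_conv_add_uminus submod_gen.gen_add)

lemma X_sym: "R12sup k1 k2 (k1-a) (k2-b) c = - R12sup k1 k2 a b c"
  unfolding R12sup_def by simp

lemma NR_c: assumes "c' + c = -2" shows "NR a b c' = - NR a b c"
proof -
  have 1: "mono a b c' = - mono a b c" by (rule mono_r3) (use assms in simp)
  have 2: "mono (a-2) (b-2) c' = - mono (a-2) (b-2) c" by (rule mono_r3) (use assms in simp)
  have 3: "mono (a-1) (b-1) (c'+1) = - mono (a-1) (b-1) (c-1)" by (rule mono_r3) (use assms in simp)
  have 4: "mono (a-1) (b-1) (c'-1) = - mono (a-1) (b-1) (c+1)" by (rule mono_r3) (use assms in simp)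
  show ?thesis unfolding NR_def 1 2 3 4 by (simp add: smul_minus algebra_simps)
qed

lemma X_c: assumes "c' + c = -2" shows "R12sup k1 k2 a b c' = - R12sup k1 k2 a b c"
  unfolding R12sup_def R12_NR NR_c[OF assms, of a b] NR_c[OF assms, of "-a+k1" "-b+k2"]
  by (simp add: smul_minus)

lemma X_m1: "R12sup k1 k2 a b (-1) = 0"
proof -
  have "R12sup k1 k2 a b (-1) = - R12sup k1 k2 a b (-1)" by (rule X_c) simp
  then have "R12sup k1 k2 a b (-1) + R12sup k1 k2 a b (-1) = 0" by (metis add.right_inverse)
  then show ?thesis by (rule torsion_free)
qed

definition Jmin :: "int \<Rightarrow> int \<Rightarrow> fmod set" where
  "Jmin k1 k2 = J12 k1 k2 {real_of_int k1<..} {0..}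
                     \<union> J12 k1 k2 {real_of_int k1 / 2<..real_of_int k1} {real_of_int k2 / 2<..}
                     \<union> J12 k1 k2 {0..real_of_int k1 / 2} {real_of_int k2 / 2..}"

definition goodX :: "int \<Rightarrow> int \<Rightarrow> int \<Rightarrow> int \<Rightarrow> bool" where
  "goodX k1 k2 a b \<longleftrightarrow> (\<forall>c. R12sup k1 k2 a b c \<in> submod_gen (Jmin k1 k2))"

lemma goodX_sym: "goodX k1 k2 (k1-a) (k2-b) \<Longrightarrow> goodX k1 k2 a b"
  unfolding goodX_def X_sym by (metis G_neg minus_minus)

lemma goodX_pos: assumes "\<And>c. c \<ge> 0 \<Longrightarrow> R12sup k1 k2 a b c \<in> submod_gen (Jmin k1 k2)"
  shows "goodX k1 k2 a b"
  unfolding goodX_def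
proof
  fix c :: int
  show "R12sup k1 k2 a b c \<in> submod_gen (Jmin k1 k2)"
  proof (cases "c \<ge> 0")
    case True then show ?thesis by (rule assms)
  next
    case False
    show ?thesis
    proof (cases "c = -1")
      case True then show ?thesis using X_m1 submod_gen.gen_zero by simp
    next
      case False
      with \<open>\<not> c \<ge> 0\<close> have "-c-2 \<ge> 0" by simp
      then have "R12sup k1 k2 a b (-c-2) \<in> submod_gen (Jmin k1 k2)" by (rule assms)
      moreover have "R12sup k1 k2 a b c = - R12sup k1 k2 a b (-c-2)" by (rule X_c) simp
      ultimately show ?thesis using G_neg by metis
    qed
  qed
qed

lemma inJ: "real_of_int a \<in> I1 \<Longrightarrow> real_of_int b \<in> I2 \<Longrightarrow> c \<ge> 0 \<Longrightarrow> R12sup k1 k2 a b c \<in> J12 k1 k2 I1 I2"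
  unfolding J12_def by blast

lemma r1: "(k::int) < 2*a \<Longrightarrow> real_of_int k / 2 < real_of_int a"
proof -
  assume "k < 2*a" then have "real_of_int k < real_of_int (2*a)" by (simp only: of_int_less_iff)
  then show ?thesis by simp
qed

lemma r2: "2*a \<le> (k::int) \<Longrightarrow> real_of_int a \<le> real_of_int k / 2"
proof -
  assume "2*a \<le> k" then have "real_of_int (2*a) \<le> real_of_int k" by (simp only: of_int_le_iff)
  then show ?thesis by simp
qed

lemma r3: "(k::int) \<le> 2*a \<Longrightarrow> real_of_int k / 2 \<le> real_of_int a"
proof -
  assume "k \<le> 2*a" then have "real_of_int k \<le> real_of_int (2*a)" by (simp only: of_int_le_iff)
  then show ?thesis by simp
qed

lemma inJmin1: "k1 < a \<Longrightarrow> 0 \<le> b \<Longrightarrow> 0 \<le> c \<Longrightarrow> R12sup k1 k2 a b c \<in> submod_gen (Jmin k1 k2)"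
  unfolding Jmin_def by (intro submod_gen.gen_base UnI1 inJ) simp_all

lemma inJmin2: "k1 < 2*a \<Longrightarrow> a \<le> k1 \<Longrightarrow> k2 < 2*b \<Longrightarrow> 0 \<le> c \<Longrightarrow> R12sup k1 k2 a b c \<in> submod_gen (Jmin k1 k2)"
  unfolding Jmin_def by (intro submod_gen.gen_base UnI1 UnI2 inJ) (simp_all add: r1)

lemma inJmin3: "0 \<le> a \<Longrightarrow> 2*a \<le> k1 \<Longrightarrow> k2 \<le> 2*b \<Longrightarrow> 0 \<le> c \<Longrightarrow> R12sup k1 k2 a b c \<in> submod_gen (Jmin k1 k2)"
  unfolding Jmin_def by (intro submod_gen.gen_base UnI2 inJ) (simp_all add: r2 r3)

lemma inJsym: "R12sup k1 k2 (k1-a) (k2-b) c \<in> submod_gen (Jmin k1 k2) \<Longrightarrow> R12sup k1 k2 a b c \<in> submod_gen (Jmin k1 k2)"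
  unfolding X_sym by (metis G_neg minus_minus)

lemma cover: assumes "1 \<le> k1" "\<not> (k1 < a \<and> b < 0)" "\<not> (a < 0 \<and> k2 < b)"
  shows "goodX k1 k2 a b"
proof (rule goodX_pos)
  fix c :: int assume c: "c \<ge> 0"
  show "R12sup k1 k2 a b c \<in> submod_gen (Jmin k1 k2)"
  proof -
    consider "k1 < a" | "a < 0" | "0 \<le> a \<and> a \<le> k1" by linarith
    then show ?thesis
    proof cases
      case 1 then show ?thesis using assms c inJmin1 by simp
    next
      case 2 then show ?thesis using assms c inJmin1[of k1 "k1-a" "k2-b" c k2] inJsym by simp
    next
      case 3
      consider "2*a \<le> k1 \<and> k2 \<le> 2*b" | "2*a < k1 \<and> 2*b < k2" | "2*a = k1 \<and> 2*b < k2"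
        | "k1 < 2*a \<and> k2 < 2*b" | "k1 < 2*a \<and> 2*b \<le> k2" by linarith
      then show ?thesis
      proof cases
        case 1 then show ?thesis using \<open>0 \<le> a \<and> a \<le> k1\<close> c inJmin3 by simp
      next
        case 2 then show ?thesis using \<open>0 \<le> a \<and> a \<le> k1\<close> c inJmin2[of k1 "k1-a" k2 "k2-b" c] inJsym by simp
      next
        case 3 then show ?thesis using \<open>0 \<le> a \<and> a \<le> k1\<close> c inJmin3[of "k1-a" k1 k2 "k2-b" c] inJsym by simp
      next
        case 4 then show ?thesis using \<open>0 \<le> a \<and> a \<le> k1\<close> c inJmin2 by simp
      next
        case 5 then show ?thesis using \<open>0 \<le> a \<and> a \<le> k1\<close> c inJmin3[of "k1-a" k1 k2 "k2-b" c] inJsym by simp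
      qed
    qed
  qed
qed


lemma Z_in: "goodX k1 k2 a b \<Longrightarrow> goodX k1 k2 (a-1) (b+1) \<Longrightarrow> goodX k1 k2 (a-2) (b+2)
   \<Longrightarrow> Z k1 k2 a b c \<in> submod_gen (Jmin k1 k2)"
  unfolding Z_def goodX_def
  by (intro submod_gen.gen_smul submod_gen.gen_add) auto

lemma X_from_Z: assumes "Z k1 k2 a b c \<in> submod_gen (Jmin k1 k2)"
   "goodX k1 k2 (a-1) (b+1)" "goodX k1 k2 (a-2) (b+2)"
  shows "R12sup k1 k2 a b c \<in> submod_gen (Jmin k1 k2)"
proof -
  have e: "smul (Apow (-(a+b))) (Z k1 k2 a b c) = R12sup k1 k2 a b c
     + smul (Apow 2) (R12sup k1 k2 (a-1) (b+1) (c+1) + R12sup k1 k2 (a-1) (b+1) (c-1))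
     + smul (Apow 4) (R12sup k1 k2 (a-2) (b+2) c)"
    unfolding Z_def smul_AA by (simp add: smul_A0)
  have "R12sup k1 k2 a b c = smul (Apow (-(a+b))) (Z k1 k2 a b c)
     - smul (Apow 2) (R12sup k1 k2 (a-1) (b+1) (c+1) + R12sup k1 k2 (a-1) (b+1) (c-1))
     - smul (Apow 4) (R12sup k1 k2 (a-2) (b+2) c)"
    unfolding e by simp
  also have "\<dots> \<in> submod_gen (Jmin k1 k2)"
    using assms unfolding goodX_def
    by (intro G_diff submod_gen.gen_smul submod_gen.gen_add) auto
  finally show ?thesis .
qed

lemma missing: assumes k1: "1 \<le> k1" shows "k1 < a \<Longrightarrow> b < 0 \<Longrightarrow> goodX k1 k2 a b"
proof (induction "nat a" arbitrary: a b rule: less_induct)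
  case less
  have good_of: "goodX k1 k2 p q" if h1: "k1 < p \<and> q < 0 \<longrightarrow> p < a" and h2: "p < 0 \<and> k2 < q \<longrightarrow> k1 - p < a" for p q
  proof -
    consider "k1 < p \<and> q < 0" | "p < 0 \<and> k2 < q" | "\<not> (k1 < p \<and> q < 0)" "\<not> (p < 0 \<and> k2 < q)" by blast
    then show ?thesis
    proof cases
      case 1 then show ?thesis using less.hyps[of p q] h1 less.prems k1 by simp
    next
      case 2
      then have "goodX k1 k2 (k1-p) (k2-q)" using less.hyps[of "k1-p" "k2-q"] h2 less.prems k1 by simp
      then show ?thesis by (rule goodX_sym)
    next
      case 3 then show ?thesis using cover k1 by blast
    qed
  qed
  have ga1: "goodX k1 k2 (a-1) (b+1)" by (rule good_of) (use less.prems k1 in arith)+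
  have ga2: "goodX k1 k2 (a-2) (b+2)" by (rule good_of) (use less.prems k1 in arith)+
  show ?case unfolding goodX_def
  proof
    fix c
    have "Z k1 k2 a b c \<in> submod_gen (Jmin k1 k2)"
    proof (cases "a = k1 + 1")
      case True
      show ?thesis
      proof (cases "b = -1")
        case True
        then show ?thesis using \<open>a = k1 + 1\<close> REL_ab submod_gen.gen_zero by simp
      next
        case False
        have "Z k1 k2 a (-b-2) c \<in> submod_gen (Jmin k1 k2)"
          by (rule Z_in; rule good_of) (use less.prems k1 \<open>b \<noteq> -1\<close> in arith)+
        moreover have "Z k1 k2 a b c = - Z k1 k2 a (-b-2) c"
          using REL_a[of k1 k2 b c] \<open>a = k1 + 1\<close> by (simp add: eq_neg_iff_add_eq_0)
        ultimately show ?thesis using G_neg by metis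
      qed
    next
      case False
      show ?thesis
      proof (cases "b = -1")
        case True
        have "Z k1 k2 (2*k1+2-a) (-1) c \<in> submod_gen (Jmin k1 k2)"
          by (rule Z_in; rule good_of) (use less.prems k1 \<open>a \<noteq> k1 + 1\<close> in arith)+
        then have "- smul (Apow (4*(a-k1-1))) (Z k1 k2 (2*k1+2-a) (-1) c) \<in> submod_gen (Jmin k1 k2)"
          by (intro G_neg submod_gen.gen_smul)
        moreover have "Z k1 k2 a (-1) c = - smul (Apow (4*(a-k1-1))) (Z k1 k2 (2*k1+2-a) (-1) c)"
          using REL_b[of k1 k2 a c] by (simp add: eq_neg_iff_add_eq_0)
        ultimately show ?thesis using True by simp
      next
        case False
        have "Z k1 k2 a (-b-2) c \<in> submod_gen (Jmin k1 k2)"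
          by (rule Z_in; rule good_of) (use less.prems k1 \<open>b \<noteq> -1\<close> in arith)+
        moreover have "Z k1 k2 (2*k1+2-a) b c \<in> submod_gen (Jmin k1 k2)"
          by (rule Z_in; rule good_of) (use less.prems k1 \<open>a \<noteq> k1 + 1\<close> \<open>b \<noteq> -1\<close> in arith)+
        moreover have "Z k1 k2 (2*k1+2-a) (-b-2) c \<in> submod_gen (Jmin k1 k2)"
          by (rule Z_in; rule good_of) (use less.prems k1 \<open>a \<noteq> k1 + 1\<close> \<open>b \<noteq> -1\<close> in arith)+
        ultimately have "- (Z k1 k2 a (-b-2) c + smul (Apow (4*(a-k1-1)))
            (Z k1 k2 (2*k1+2-a) b c + Z k1 k2 (2*k1+2-a) (-b-2) c)) \<in> submod_gen (Jmin k1 k2)"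
          by (intro G_neg submod_gen.gen_smul submod_gen.gen_add)
        moreover have "Z k1 k2 a b c = - (Z k1 k2 a (-b-2) c + smul (Apow (4*(a-k1-1)))
            (Z k1 k2 (2*k1+2-a) b c + Z k1 k2 (2*k1+2-a) (-b-2) c))"
          using REL_gen[of k1 k2 a b c] unfolding add.assoc by (rule eq_neg_iff_add_eq_0[THEN iffD2])
        ultimately show ?thesis by simp
      qed
    qed
    then show "R12sup k1 k2 a b c \<in> submod_gen (Jmin k1 k2)"
      using X_from_Z ga1 ga2 by blast
  qed
qed

lemma allgood: assumes "1 \<le> k1" shows "goodX k1 k2 a b"
proof -
  consider "k1 < a \<and> b < 0" | "a < 0 \<and> k2 < b" | "\<not> (k1 < a \<and> b < 0)" "\<not> (a < 0 \<and> k2 < b)" by blast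
  then show ?thesis
  proof cases
    case 1 then show ?thesis using missing assms by blast
  next
    case 2 then have "goodX k1 k2 (k1-a) (k2-b)" using missing assms by simp
    then show ?thesis by (rule goodX_sym)
  next
    case 3 then show ?thesis using cover assms by blast
  qed
qed

lemma main: assumes "1 \<le> k1"
  shows "submod_gen {R12sup k1 k2 n1 n2 n3 | n1 n2 n3. True} = submod_gen (Jmin k1 k2)"
proof
  show "submod_gen {R12sup k1 k2 n1 n2 n3 | n1 n2 n3. True} \<subseteq> submod_gen (Jmin k1 k2)"
  proof
    fix x assume "x \<in> submod_gen {R12sup k1 k2 n1 n2 n3 | n1 n2 n3. True}"
    then show "x \<in> submod_gen (Jmin k1 k2)"
    proof induction
      case gen_zero then show ?case by (rule submod_gen.gen_zero)
    next
      case (gen_base x) then show ?case using allgood[OF assms] unfolding goodX_def by blast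
    next
      case (gen_add x y) then show ?case by (blast intro: submod_gen.gen_add)
    next
      case (gen_smul x c) then show ?case by (blast intro: submod_gen.gen_smul)
    qed
  qed
next
  show "submod_gen (Jmin k1 k2) \<subseteq> submod_gen {R12sup k1 k2 n1 n2 n3 | n1 n2 n3. True}"
  proof
    fix x assume "x \<in> submod_gen (Jmin k1 k2)"
    then show "x \<in> submod_gen {R12sup k1 k2 n1 n2 n3 | n1 n2 n3. True}"
    proof induction
      case gen_zero then show ?case by (rule submod_gen.gen_zero)
    next
      case (gen_base x)
      then have "x \<in> {R12sup k1 k2 n1 n2 n3 | n1 n2 n3. True}" unfolding Jmin_def J12_def by blast
      then show ?case by (rule submod_gen.gen_base)
    next
      case (gen_add x y) then show ?case by (blast intro: submod_gen.gen_add)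
    next
      case (gen_smul x c) then show ?case by (blast intro: submod_gen.gen_smul)
    qed
  qed
qed

theorem proposition4p1:
  fixes k1 k2 :: int
  assumes "1 \<le> k1" and "k1 \<le> k2"
  shows "submod_gen {R12sup k1 k2 n1 n2 n3 | n1 n2 n3. True} =
         submod_gen (J12 k1 k2 {real_of_int k1<..} {0..}
                     \<union> J12 k1 k2 {real_of_int k1 / 2<..real_of_int k1} {real_of_int k2 / 2<..}
                     \<union> J12 k1 k2 {0..real_of_int k1 / 2} {real_of_int k2 / 2..})"
  using main[OF assms(1)] unfolding Jmin_def .

end
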